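(* Let $\mathcal{B}$ be a real Banach space whose dual space $\mathcal{B}^*$ is smooth, let $\nu_j\in\mathcal{B}^*$, $j\in\mathbb{N}_m$, be linearly independent and let $\mathbf{y}\in\mathbb{R}^m$. Then $\hat f\in\mathcal{B}$ is a solution of the minimum norm interpolation problem with data $\mathbf{y}$ if and only if $\hat f\in\mathcal{M}_{\mathbf{y}}$ and there exist $c_j\in\mathbb{R}$, $j\in\mathbb{N}_m$, such that $$\hat f=\rho\,\mathcal{G}^*\Big(\sum_{j\in\mathbb{N}_m}c_j\nu_j\Big),\qquad \rho:=\Big\|\sum_{j\in\mathbb{N}_m}c_j\nu_j\Big\|_{\mathcal{B}^*},$$ where $\hat f$ is identified with its canonical image in $\mathcal{B}^{**}$.
   Context: $\mathcal{B}$ is a real Banach space with dual $\mathcal{B}^*$ and pairing $\langle\nu,f\rangle_{\mathcal{B}}:=\nu(f)$; $\mathbb{N}_m:=\{1,\dots,m\}$; $\mathcal{L}(f):=[\langle\nu_j,f\rangle_{\mathcal{B}}:j\in\mathbb{N}_m]$, $\mathcal{M}_{\mathbf{y}}:=\{f\in\mathcal{B}:\mathcal{L}(f)=\mathbf{y}\}$; a solution of the minimum norm interpolation problem with data $\mathbf{y}$ is an $\hat f\in\mathcal{M}_{\mathbf{y}}$ with $\|\hat f\|_{\mathcal{B}}=\inf\{\|f\|_{\mathcal{B}}:f\in\mathcal{M}_{\mathbf{y}}\}$. A normed space $X$ is smooth if its norm is Gâteaux differentiable at every $x\neq0$, i.e. $\lim_{t\to0}(\|x+th\|-\|x\|)/t$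 exists for all $h$; the Gâteaux derivative is the functional in $X^*$ given by this limit. $\mathcal{G}^*(\nu)\in\mathcal{B}^{**}$ denotes the Gâteaux derivative of $\|\cdot\|_{\mathcal{B}^*}$ at $\nu\neq0$, and $\mathcal{G}^*(0):=0$. *)

theory Defs
  imports "HOL-Analysis.Analysis"
begin

definition norm_dq :: "'b::real_normed_vector \<Rightarrow> 'b \<Rightarrow> real \<Rightarrow> real" where
  "norm_dq x h t = (norm (x + t *\<^sub>R h) - norm x) / t"

definition smooth_space :: "'b::real_normed_vector itself \<Rightarrow> bool" where
  "smooth_space _ \<longleftrightarrow>
     (\<forall>x::'b. x \<noteq> 0 \<longrightarrow> (\<forall>h. \<exists>l. (norm_dq x h \<longlongrightarrow> l) (at (0::real))))"

definition gateaux_norm :: "'b::real_normed_vector \<Rightarrow> 'b \<Rightarrow> real" where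
  "gateaux_norm x h = (if x = 0 then 0 else Lim (at (0::real)) (norm_dq x h))"

definition lin_indep_family :: "(nat \<Rightarrow> 'b::real_vector) \<Rightarrow> nat \<Rightarrow> bool" where
  "lin_indep_family \<nu> m \<longleftrightarrow>
     (\<forall>c. (\<Sum>j=1..m. c j *\<^sub>R \<nu> j) = 0 \<longrightarrow> (\<forall>j\<in>{1..m}. c j = 0))"

definition interp_set :: "(nat \<Rightarrow> ('a::real_normed_vector \<Rightarrow>\<^sub>L real)) \<Rightarrow> nat \<Rightarrow> (nat \<Rightarrow> real) \<Rightarrow> 'a set" where
  "interp_set \<nu> m y = {f. \<forall>j\<in>{1..m}. blinfun_apply (\<nu> j) f = y j}"

definition min_norm_interp_sol ::
  "(nat \<Rightarrow> ('a::real_normed_vector \<Rightarrow>\<^sub>L real)) \<Rightarrow> nat \<Rightarrow> (nat \<Rightarrow> real) \<Rightarrow> 'a \<Rightarrow> bool" where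
  "min_norm_interp_sol \<nu> m y f \<longleftrightarrow>
     f \<in> interp_set \<nu> m y \<and> norm f = Inf (norm ` interp_set \<nu> m y)"

end

theory Submission
  imports Defs
begin

definition PG :: "('a::real_vector \<Rightarrow> real) \<Rightarrow> 'a \<Rightarrow> ('a \<times> real) set \<Rightarrow> bool" where
 "PG p x0 G \<longleftrightarrow> (\<forall>x a b. (x,a)\<in>G \<longrightarrow> (x,b)\<in>G \<longrightarrow> a=b) \<and>
    (\<forall>x a y b. (x,a)\<in>G \<longrightarrow> (y,b)\<in>G \<longrightarrow> (x+y,a+b)\<in>G) \<and>
    (\<forall>x a c. (x,a)\<in>G \<longrightarrow> (c *\<^sub>R x, c*a)\<in>G) \<and>
    (\<forall>x a. (x,a)\<in>G \<longrightarrow> a \<le> p x) \<and> (x0, p x0) \<in> G"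

lemma HB_sublinear:
  fixes p :: "'a::real_vector \<Rightarrow> real"
  assumes sub: "\<And>x y. p (x+y) \<le> p x + p y"
    and hom: "\<And>c x. c \<ge> 0 \<Longrightarrow> p (c *\<^sub>R x) = c * p x"
  shows "\<exists>\<phi>. (\<forall>x y. \<phi> (x+y) = \<phi> x + \<phi> y) \<and> (\<forall>c x. \<phi> (c *\<^sub>R x) = c * \<phi> x)
            \<and> (\<forall>x. \<phi> x \<le> p x) \<and> \<phi> x0 = p x0"
proof -
  have p0: "p 0 = 0" using hom[of 0 0] by simp
  have pneg: "- p x \<le> p (- x)" for x using sub[of x "-x"] p0 by simp
  define A where "A = {G. PG p x0 G}"
  define G0 where "G0 = {(t *\<^sub>R x0, t * p x0) | t. True}"
  have G0A: "G0 \<in> A"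
    unfolding A_def PG_def
  proof (intro CollectI conjI allI impI)
    fix x a b assume "(x,a) \<in> G0" "(x,b) \<in> G0"
    then obtain t s where ts: "x = t *\<^sub>R x0" "a = t * p x0" "x = s *\<^sub>R x0" "b = s * p x0"
      unfolding G0_def by blast
    show "a = b"
    proof (cases "x0 = 0")
      case True then show ?thesis using ts p0 by simp
    next
      case False then have "t = s" using ts by (metis scaleR_cancel_right)
      then show ?thesis using ts by simp
    qed
  next
    fix x a y b assume "(x,a) \<in> G0" "(y,b) \<in> G0"
    then obtain t s where ts: "x = t *\<^sub>R x0" "a = t * p x0" "y = s *\<^sub>R x0" "b = s * p x0"
      unfolding G0_def by blast
    show "(x+y, a+b) \<in> G0" unfolding G0_def using ts
      by (auto intro!: exI[of _ "t+s"] simp: scaleR_add_left algebra_simps)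
  next
    fix x a c assume "(x,a) \<in> G0"
    then obtain t where ts: "x = t *\<^sub>R x0" "a = t * p x0" unfolding G0_def by blast
    show "(c *\<^sub>R x, c*a) \<in> G0" unfolding G0_def using ts
      by (auto intro!: exI[of _ "c*t"])
  next
    fix x a assume "(x,a) \<in> G0"
    then obtain t where ts: "x = t *\<^sub>R x0" "a = t * p x0" unfolding G0_def by blast
    show "a \<le> p x"
    proof (cases "t \<ge> 0")
      case True then show ?thesis using ts hom by simp
    next
      case False
      have "x = (-t) *\<^sub>R (- x0)" using ts by simp
      then have "p x = (-t) * p (-x0)" using hom[of "-t" "-x0"] False by simp
      moreover have "(-t) * (- p x0) \<le> (-t) * p (-x0)"
        using pneg[of x0] False by (intro mult_left_mono) auto
      ultimately show ?thesis using ts by simp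
    qed
  next
    show "(x0, p x0) \<in> G0" unfolding G0_def by (auto intro!: exI[of _ 1])
  qed
  have "\<forall>C\<in>chains A. \<exists>U\<in>A. \<forall>X\<in>C. X \<subseteq> U"
  proof
    fix C assume C: "C \<in> chains A"
    show "\<exists>U\<in>A. \<forall>X\<in>C. X \<subseteq> U"
    proof (cases "C = {}")
      case True then show ?thesis using G0A by auto
    next
      case False
      have CA: "C \<subseteq> A" and ch: "\<And>X Y. X \<in> C \<Longrightarrow> Y \<in> C \<Longrightarrow> X \<subseteq> Y \<or> Y \<subseteq> X"
        using C unfolding chains_def chain_subset_def by auto
      have two: "\<exists>X\<in>C. u \<in> X \<and> v \<in> X" if "u \<in> \<Union>C" "v \<in> \<Union>C" for u v
        using that ch by blast
      have PX: "PG p x0 X" if "X \<in> C" for X using that CA A_def by auto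
      have "\<Union>C \<in> A" unfolding A_def PG_def
      proof (intro CollectI conjI allI impI)
        fix x a b assume "(x,a) \<in> \<Union>C" "(x,b) \<in> \<Union>C"
        then obtain X where "X \<in> C" "(x,a)\<in>X" "(x,b)\<in>X" using two by blast
        then show "a = b" using PX unfolding PG_def by blast
      next
        fix x a y b assume "(x,a) \<in> \<Union>C" "(y,b) \<in> \<Union>C"
        then obtain X where "X \<in> C" "(x,a)\<in>X" "(y,b)\<in>X" using two by blast
        then show "(x+y,a+b) \<in> \<Union>C" using PX unfolding PG_def by blast
      next
        fix x a c assume "(x,a) \<in> \<Union>C"
        then obtain X where "X \<in> C" "(x,a)\<in>X" by blast
        then show "(c *\<^sub>R x,c*a) \<in> \<Union>C" using PX unfolding PG_def by blast
      next
        fix x a assume "(x,a) \<in> \<Union>C"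
        then obtain X where "X \<in> C" "(x,a)\<in>X" by blast
        then show "a \<le> p x" using PX unfolding PG_def by blast
      next
        obtain X where "X \<in> C" using False by blast
        then show "(x0, p x0) \<in> \<Union>C" using PX unfolding PG_def by blast
      qed
      then show ?thesis by blast
    qed
  qed
  from Zorn_Lemma2[OF this] obtain M where MA: "M \<in> A" and max: "\<And>X. X \<in> A \<Longrightarrow> M \<subseteq> X \<Longrightarrow> X = M"
    by blast
  have PM: "PG p x0 M" using MA A_def by auto
  have sv: "\<And>x a b. (x,a)\<in>M \<Longrightarrow> (x,b)\<in>M \<Longrightarrow> a=b"
    and ad: "\<And>x a y b. (x,a)\<in>M \<Longrightarrow> (y,b)\<in>M \<Longrightarrow> (x+y,a+b)\<in>M"
    and sc: "\<And>x a c. (x,a)\<in>M \<Longrightarrow> (c *\<^sub>R x, c*a)\<in>M"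
    and bd: "\<And>x a. (x,a)\<in>M \<Longrightarrow> a \<le> p x"
    and x0M: "(x0, p x0) \<in> M" using PM unfolding PG_def by blast+
  have zeroM: "(0,0) \<in> M" using sc[OF x0M, of 0] by simp
  have total: "\<exists>a. (z,a) \<in> M" for z
  proof (rule ccontr)
    assume nz: "\<nexists>a. (z,a) \<in> M"
    define S where "S = {b - p (s - z) | s b. (s,b) \<in> M}"
    have Sne: "S \<noteq> {}" using zeroM S_def by blast
    have key: "b1 - p (s1 - z) \<le> p (s2 + z) - b2" if "(s1,b1)\<in>M" "(s2,b2)\<in>M" for s1 b1 s2 b2
    proof -
      have "b1 + b2 \<le> p (s1 + s2)" using bd[OF ad[OF that]] .
      also have "\<dots> \<le> p (s1 - z) + p (s2 + z)" using sub[of "s1 - z" "s2 + z"] by simp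
      finally show ?thesis by simp
    qed
    define a where "a = Sup S"
    have bddS: "bdd_above S" unfolding bdd_above_def S_def using key zeroM by blast
    have a_lo: "b - p (s - z) \<le> a" if "(s,b) \<in> M" for s b
      unfolding a_def by (rule cSup_upper[OF _ bddS]) (use that S_def in blast)
    have a_hi: "a \<le> p (s + z) - b" if "(s,b) \<in> M" for s b
      unfolding a_def by (rule cSup_least[OF Sne]) (use that key S_def in blast)
    define G' where "G' = {(s + t *\<^sub>R z, b + t * a) | s b t. (s,b) \<in> M}"
    have G'A: "G' \<in> A" unfolding A_def PG_def
    proof (intro CollectI conjI allI impI)
      fix x c d assume "(x,c) \<in> G'" "(x,d) \<in> G'"
      then obtain s b t s' b' t' where h: "(s,b)\<in>M" "(s',b')\<in>M" "x = s + t *\<^sub>R z" "c = b + t*a"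
        "x = s' + t' *\<^sub>R z" "d = b' + t'*a" unfolding G'_def by blast
      have tt: "t = t'"
      proof (rule ccontr)
        assume ne: "t \<noteq> t'"
        have "(s' + (-1) *\<^sub>R s, b' + (-1)*b) \<in> M" using ad[OF h(2) sc[OF h(1)]] .
        then have "(s' - s, b' - b) \<in> M" by simp
        from sc[OF this, of "1/(t-t')"]
        have "((1/(t - t')) *\<^sub>R (s' - s), (1/(t-t')) * (b' - b)) \<in> M" .
        moreover have "(1/(t - t')) *\<^sub>R (s' - s) = z"
        proof -
          have "s' - s = (t - t') *\<^sub>R z" using h(3,5) by (simp add: algebra_simps)
          then show ?thesis using ne by simp
        qed
        ultimately show False using nz by auto
      qed
      then have "s = s'" using h by simp
      then have "b = b'" using sv h by blast
      then show "c = d" using h tt by simp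
    next
      fix x c y d assume "(x,c) \<in> G'" "(y,d) \<in> G'"
      then obtain s b t s' b' t' where h: "(s,b)\<in>M" "(s',b')\<in>M" "x = s + t *\<^sub>R z" "c = b + t*a"
        "y = s' + t' *\<^sub>R z" "d = b' + t'*a" unfolding G'_def by blast
      have "(x+y, c+d) = ((s+s') + (t+t') *\<^sub>R z, (b+b') + (t+t')*a)"
        using h by (simp add: algebra_simps)
      then show "(x+y, c+d) \<in> G'" unfolding G'_def using ad[OF h(1,2)] by blast
    next
      fix x c r assume "(x,c) \<in> G'"
      then obtain s b t where h: "(s,b)\<in>M" "x = s + t *\<^sub>R z" "c = b + t*a"
        unfolding G'_def by blast
      have "(r *\<^sub>R x, r*c) = (r *\<^sub>R s + (r*t) *\<^sub>R z, r*b + (r*t)*a)"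
        using h by (simp add: algebra_simps)
      then show "(r *\<^sub>R x, r*c) \<in> G'" unfolding G'_def using sc[OF h(1), of r] by blast
    next
      fix x c assume "(x,c) \<in> G'"
      then obtain s b t where h: "(s,b)\<in>M" "x = s + t *\<^sub>R z" "c = b + t*a"
        unfolding G'_def by blast
      show "c \<le> p x"
      proof (cases t "0::real" rule: linorder_cases)
        case equal then show ?thesis using h bd by simp
      next
        case greater
        have "(inverse t *\<^sub>R s, inverse t * b) \<in> M" using sc[OF h(1)] .
        from a_hi[OF this] have "inverse t * b + a \<le> p (inverse t *\<^sub>R s + z)" by simp
        then have "t * (inverse t * b + a) \<le> t * p (inverse t *\<^sub>R s + z)"
          using greater by (intro mult_left_mono) auto
        also have "\<dots> = p (t *\<^sub>R (inverse t *\<^sub>R s + z))" using hom[of t] greater by simp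
        also have "t *\<^sub>R (inverse t *\<^sub>R s + z) = x" using h greater by (simp add: algebra_simps)
        finally show ?thesis using h greater by (simp add: algebra_simps)
      next
        case less
        define u where "u = -t"
        have u: "u > 0" using less u_def by simp
        have "(inverse u *\<^sub>R s, inverse u * b) \<in> M" using sc[OF h(1)] .
        from a_lo[OF this] have "inverse u * b - a \<le> p (inverse u *\<^sub>R s - z)" by simp
        then have "u * (inverse u * b - a) \<le> u * p (inverse u *\<^sub>R s - z)"
          using u by (intro mult_left_mono) auto
        also have "\<dots> = p (u *\<^sub>R (inverse u *\<^sub>R s - z))" using hom[of u] u by simp
        also have "u *\<^sub>R (inverse u *\<^sub>R s - z) = x" using h u u_def by (simp add: algebra_simps)
        finally show ?thesis using h u u_def by (simp add: algebra_simps)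
      qed
    next
      have "(x0, p x0) = (x0 + (0::real) *\<^sub>R z, p x0 + 0 * a)" by simp
      then show "(x0, p x0) \<in> G'" unfolding G'_def using x0M by blast
    qed
    have "M \<subseteq> G'"
    proof
      fix q assume "q \<in> M"
      moreover obtain s b where "q = (s,b)" by (cases q)
      moreover have "(s,b) = (s + (0::real) *\<^sub>R z, b + 0 * a)" by simp
      ultimately show "q \<in> G'" unfolding G'_def by blast
    qed
    moreover have "(z, a) \<in> G'"
    proof -
      have "(z, a) = (0 + (1::real) *\<^sub>R z, 0 + 1 * a)" by simp
      then show ?thesis unfolding G'_def using zeroM by blast
    qed
    ultimately show False using max[OF G'A] nz by blast
  qed
  define \<phi> where "\<phi> x = (SOME a. (x,a) \<in> M)" for x
  have phiM: "(x, \<phi> x) \<in> M" for x unfolding \<phi>_def using total by (rule someI_ex)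
  have phieq: "(x,a) \<in> M \<Longrightarrow> \<phi> x = a" for x a using sv phiM by blast
  show ?thesis
  proof (intro exI[of _ \<phi>] conjI allI)
    fix x y show "\<phi> (x+y) = \<phi> x + \<phi> y" using phieq[OF ad[OF phiM phiM]] .
  next
    fix c x show "\<phi> (c *\<^sub>R x) = c * \<phi> x" using phieq[OF sc[OF phiM]] .
  next
    fix x show "\<phi> x \<le> p x" using bd[OF phiM] .
  next
    show "\<phi> x0 = p x0" using phieq[OF x0M] .
  qed
qed


lemma ker_comb:
  fixes \<nu> :: "nat \<Rightarrow> ('a::real_normed_vector \<Rightarrow>\<^sub>L real)"
  assumes "finite J"
  shows "(\<forall>x y. \<phi> (x+y) = \<phi> x + \<phi> y) \<Longrightarrow> (\<forall>c x. \<phi> (c *\<^sub>R x) = c * \<phi> x) \<Longrightarrow>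
    (\<forall>x. (\<forall>j\<in>J. blinfun_apply (\<nu> j) x = 0) \<longrightarrow> \<phi> x = 0) \<Longrightarrow>
    \<exists>c. \<forall>x. \<phi> x = (\<Sum>j\<in>J. c j * blinfun_apply (\<nu> j) x)"
  using assms
proof (induction J arbitrary: \<phi> rule: finite_induct)
  case empty
  then show ?case by simp
next
  case (insert k J)
  show ?case
  proof (cases "\<forall>x. (\<forall>j\<in>J. blinfun_apply (\<nu> j) x = 0) \<longrightarrow> blinfun_apply (\<nu> k) x = 0")
    case True
    have "\<forall>x. (\<forall>j\<in>J. blinfun_apply (\<nu> j) x = 0) \<longrightarrow> \<phi> x = 0"
      using True insert.prems(3) by auto
    from insert.IH[OF insert.prems(1,2) this] obtain c where
      c: "\<forall>x. \<phi> x = (\<Sum>j\<in>J. c j * blinfun_apply (\<nu> j) x)" by blast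
    show ?thesis
    proof (intro exI[of _ "c(k:=0)"] allI)
      fix x
      have "(\<Sum>j\<in>insert k J. (c(k:=0)) j * blinfun_apply (\<nu> j) x)
          = (\<Sum>j\<in>J. (c(k:=0)) j * blinfun_apply (\<nu> j) x)" using insert.hyps by simp
      also have "\<dots> = (\<Sum>j\<in>J. c j * blinfun_apply (\<nu> j) x)"
        using insert.hyps by (intro sum.cong) auto
      finally show "\<phi> x = (\<Sum>j\<in>insert k J. (c(k:=0)) j * blinfun_apply (\<nu> j) x)" using c by simp
    qed
  next
    case False
    then obtain e where e: "\<forall>j\<in>J. blinfun_apply (\<nu> j) e = 0" "blinfun_apply (\<nu> k) e \<noteq> 0" by blast
    define e' where "e' = inverse (blinfun_apply (\<nu> k) e) *\<^sub>R e"
    have e': "\<forall>j\<in>J. blinfun_apply (\<nu> j) e' = 0" "blinfun_apply (\<nu> k) e' = 1"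
      using e by (auto simp: e'_def blinfun.scaleR_right)
    define \<psi> where "\<psi> x = \<phi> x - \<phi> e' * blinfun_apply (\<nu> k) x" for x
    have \<psi>1: "\<forall>x y. \<psi> (x+y) = \<psi> x + \<psi> y"
      using insert.prems(1) by (simp add: \<psi>_def blinfun.add_right algebra_simps)
    have \<psi>2: "\<forall>c x. \<psi> (c *\<^sub>R x) = c * \<psi> x"
      using insert.prems(2) by (simp add: \<psi>_def blinfun.scaleR_right algebra_simps)
    have \<psi>3: "\<forall>x. (\<forall>j\<in>J. blinfun_apply (\<nu> j) x = 0) \<longrightarrow> \<psi> x = 0"
    proof (intro allI impI)
      fix x assume x: "\<forall>j\<in>J. blinfun_apply (\<nu> j) x = 0"
      define w where "w = x + (- blinfun_apply (\<nu> k) x) *\<^sub>R e'"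
      have "\<forall>j\<in>insert k J. blinfun_apply (\<nu> j) w = 0"
        using x e' by (auto simp: w_def blinfun.add_right blinfun.diff_right blinfun.scaleR_right)
      then have "\<phi> w = 0" using insert.prems(3) by blast
      moreover have "\<phi> w = \<phi> x - blinfun_apply (\<nu> k) x * \<phi> e'"
        by (simp only: w_def insert.prems(1)[rule_format] insert.prems(2)[rule_format])
      ultimately show "\<psi> x = 0" by (simp add: \<psi>_def)
    qed
    from insert.IH[OF \<psi>1 \<psi>2 \<psi>3] obtain c where
      c: "\<forall>x. \<psi> x = (\<Sum>j\<in>J. c j * blinfun_apply (\<nu> j) x)" by blast
    show ?thesis
    proof (intro exI[of _ "c(k:=\<phi> e')"] allI)
      fix x
      have "(\<Sum>j\<in>insert k J. (c(k:=\<phi> e')) j * blinfun_apply (\<nu> j) x)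
          = \<phi> e' * blinfun_apply (\<nu> k) x + (\<Sum>j\<in>J. (c(k:=\<phi> e')) j * blinfun_apply (\<nu> j) x)"
        using insert.hyps by simp
      also have "(\<Sum>j\<in>J. (c(k:=\<phi> e')) j * blinfun_apply (\<nu> j) x) = (\<Sum>j\<in>J. c j * blinfun_apply (\<nu> j) x)"
        using insert.hyps by (intro sum.cong) auto
      finally show "\<phi> x = (\<Sum>j\<in>insert k J. (c(k:=\<phi> e')) j * blinfun_apply (\<nu> j) x)"
        using c[rule_format, of x] by (simp add: \<psi>_def algebra_simps)
    qed
  qed
qed

lemma HB_norm:
  fixes x0 :: "'a::real_normed_vector"
  shows "\<exists>\<mu> :: 'a \<Rightarrow>\<^sub>L real. norm \<mu> \<le> 1 \<and> blinfun_apply \<mu> x0 = norm x0"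
proof -
  obtain \<phi> where \<phi>: "\<forall>x y. \<phi> (x+y) = \<phi> x + \<phi> y" "\<forall>c x. \<phi> (c *\<^sub>R x) = c * \<phi> x"
     "\<forall>x. \<phi> x \<le> norm x" "\<phi> x0 = norm x0"
    using HB_sublinear[of norm x0] by (auto simp: norm_triangle_ineq)
  have ab: "\<bar>\<phi> x\<bar> \<le> norm x" for x
  proof -
    have "\<phi> (-x) = - \<phi> x" using \<phi>(2)[rule_format, of "-1" x] by simp
    then show ?thesis using \<phi>(3)[rule_format, of x] \<phi>(3)[rule_format, of "-x"] by auto
  qed
  have bl: "bounded_linear \<phi>"
    by (rule bounded_linear_intro[where K=1]) (use \<phi> ab in auto)
  show ?thesis
  proof (intro exI[of _ "Blinfun \<phi>"] conjI)
    show "norm (Blinfun \<phi>) \<le> 1"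
      by (rule norm_blinfun_bound) (use ab bounded_linear_Blinfun_apply[OF bl] in auto)
    show "blinfun_apply (Blinfun \<phi>) x0 = norm x0" using bounded_linear_Blinfun_apply[OF bl] \<phi>(4) by simp
  qed
qed

lemma gat_lim:
  fixes x :: "'b::real_normed_vector"
  assumes "smooth_space TYPE('b)" "x \<noteq> 0"
  shows "(norm_dq x h \<longlongrightarrow> gateaux_norm x h) (at 0)"
proof -
  obtain l where l: "(norm_dq x h \<longlongrightarrow> l) (at (0::real))"
    using assms unfolding smooth_space_def by blast
  have "Lim (at (0::real)) (norm_dq x h) = l" by (rule tendsto_Lim) (use l in auto)
  then show ?thesis using l assms(2) by (simp add: gateaux_norm_def)
qed

lemma gat_bound:
  fixes x :: "'b::real_normed_vector"
  assumes "smooth_space TYPE('b)" "x \<noteq> 0"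
  shows "\<bar>gateaux_norm x h\<bar> \<le> norm h"
proof -
  have b: "\<bar>norm_dq x h t\<bar> \<le> norm h" for t
  proof (cases "t = 0")
    case True then show ?thesis by (simp add: norm_dq_def)
  next
    case False
    have "\<bar>norm (x + t *\<^sub>R h) - norm x\<bar> \<le> norm (t *\<^sub>R h)"
      by (metis add_diff_cancel_left' norm_triangle_ineq3)
    then have "\<bar>norm (x + t *\<^sub>R h) - norm x\<bar> \<le> \<bar>t\<bar> * norm h" by simp
    then show ?thesis using False by (simp add: norm_dq_def abs_divide divide_le_eq mult.commute)
  qed
  show ?thesis
    by (rule tendsto_upperbound[OF tendsto_rabs[OF gat_lim[OF assms]]]) (use b in auto)
qed

lemma gat_self:
  fixes x :: "'b::real_normed_vector"
  assumes "smooth_space TYPE('b)" "x \<noteq> 0"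
  shows "gateaux_norm x x = norm x"
proof -
  have h: "norm_dq x x t = norm x" if t: "t \<noteq> 0" "\<bar>t\<bar> < 1" for t :: real
  proof -
    have "1 + t > 0" using t by auto
    have "x + t *\<^sub>R x = (1 + t) *\<^sub>R x" by (simp add: algebra_simps)
    then have "norm (x + t *\<^sub>R x) = (1+t) * norm x" using \<open>1+t>0\<close> by simp
    then show "norm_dq x x t = norm x" using t by (simp add: norm_dq_def algebra_simps)
  qed
  have ev: "eventually (\<lambda>t. norm_dq x x t = norm x) (at (0::real))"
    unfolding eventually_at using h by (auto intro!: exI[of _ 1] simp: dist_real_def)
  have l: "(norm_dq x x \<longlongrightarrow> norm x) (at 0)" using tendsto_eventually[OF ev] by simp
  show ?thesis using tendsto_unique[OF _ gat_lim[OF assms, of x] l] by simp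
qed


theorem mainTheorem6:
  fixes \<nu> :: "nat \<Rightarrow> ('a::banach \<Rightarrow>\<^sub>L real)" and m :: nat and y :: "nat \<Rightarrow> real" and f :: 'a
  assumes "smooth_space TYPE('a \<Rightarrow>\<^sub>L real)"
    and "lin_indep_family \<nu> m"
  shows "min_norm_interp_sol \<nu> m y f \<longleftrightarrow>
    (f \<in> interp_set \<nu> m y \<and>
     (\<exists>c :: nat \<Rightarrow> real.
        \<forall>\<mu> :: 'a \<Rightarrow>\<^sub>L real.
          blinfun_apply \<mu> f =
            norm (\<Sum>j=1..m. c j *\<^sub>R \<nu> j) * gateaux_norm (\<Sum>j=1..m. c j *\<^sub>R \<nu> j) \<mu>))"
proof
  let ?M = "interp_set \<nu> m y"
  have bddM: "bdd_below (norm ` ?M)" by (rule bdd_belowI[of _ 0]) auto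
  assume sol: "min_norm_interp_sol \<nu> m y f"
  then have fM: "f \<in> ?M" and fmin: "norm f = Inf (norm ` ?M)" unfolding min_norm_interp_sol_def by auto
  show "f \<in> ?M \<and> (\<exists>c. \<forall>\<mu>. blinfun_apply \<mu> f =
            norm (\<Sum>j=1..m. c j *\<^sub>R \<nu> j) * gateaux_norm (\<Sum>j=1..m. c j *\<^sub>R \<nu> j) \<mu>)"
  proof (cases "f = 0")
    case True
    then show ?thesis using fM by (auto intro!: exI[of _ "\<lambda>_. 0"])
  next
    case False
    define N where "N = {n. \<forall>j\<in>{1..m}. blinfun_apply (\<nu> j) n = 0}"
    have N0: "0 \<in> N" by (simp add: N_def)
    have Nadd: "a + b \<in> N" if "a \<in> N" "b \<in> N" for a b
      using that by (simp add: N_def blinfun.add_right)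
    have Nsc: "r *\<^sub>R a \<in> N" if "a \<in> N" for a r
      using that by (simp add: N_def blinfun.scaleR_right)
    define p where "p x = Inf ((\<lambda>n. norm (x + n)) ` N)" for x
    have bddN: "bdd_below ((\<lambda>n. norm (x + n)) ` N)" for x by (rule bdd_belowI[of _ 0]) auto
    have p_le: "p x \<le> norm (x + n)" if "n \<in> N" for x n
      unfolding p_def by (rule cInf_lower[OF _ bddN]) (use that in auto)
    have p_ge: "a \<le> p x" if "\<And>n. n \<in> N \<Longrightarrow> a \<le> norm (x + n)" for a x
      unfolding p_def by (rule cInf_greatest) (use that N0 in auto)
    have p_nonneg: "0 \<le> p x" for x by (rule p_ge) auto
    have p_norm: "p x \<le> norm x" for x using p_le[OF N0, of x] by simp
    have pf: "p f = norm f"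
    proof (rule antisym)
      show "p f \<le> norm f" by (rule p_norm)
      show "norm f \<le> p f"
      proof (rule p_ge)
        fix n assume n: "n \<in> N"
        have "f + n \<in> ?M" using fM n by (simp add: interp_set_def N_def blinfun.add_right)
        then show "norm f \<le> norm (f + n)" unfolding fmin by (intro cInf_lower[OF _ bddM]) auto
      qed
    qed
    have sub: "p (x + z) \<le> p x + p z" for x z
    proof -
      have "p (x + z) - p z \<le> p x"
      proof (rule p_ge)
        fix n1 assume n1: "n1 \<in> N"
        have "p (x + z) - norm (x + n1) \<le> p z"
        proof (rule p_ge)
          fix n2 assume n2: "n2 \<in> N"
          have "p (x + z) \<le> norm ((x + n1) + (z + n2))"
            using p_le[OF Nadd[OF n1 n2], of "x+z"] by (simp add: algebra_simps)
          also have "\<dots> \<le> norm (x + n1) + norm (z + n2)" by (rule norm_triangle_ineq)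
          finally show "p (x + z) - norm (x + n1) \<le> norm (z + n2)" by simp
        qed
        then show "p (x + z) - p z \<le> norm (x + n1)" by simp
      qed
      then show ?thesis by simp
    qed
    have hom: "p (c *\<^sub>R x) = c * p x" if c: "c \<ge> 0" for c x
    proof (cases "c = 0")
      case True
      then show ?thesis using p_norm[of 0] p_nonneg[of 0] by simp
    next
      case False
      then have cpos: "c > 0" using c by simp
      have "p (c *\<^sub>R x) / c \<le> p x"
      proof (rule p_ge)
        fix n assume n: "n \<in> N"
        have "p (c *\<^sub>R x) \<le> norm (c *\<^sub>R x + c *\<^sub>R n)" by (rule p_le[OF Nsc[OF n]])
        also have "\<dots> = c * norm (x + n)" using cpos
          by (simp add: scaleR_add_right[symmetric] del: scaleR_add_right)
        finally show "p (c *\<^sub>R x) / c \<le> norm (x + n)" using cpos by (simp add: divide_le_eq mult.commute)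
      qed
      moreover have "c * p x \<le> p (c *\<^sub>R x)"
      proof (rule p_ge)
        fix n assume n: "n \<in> N"
        have "p x \<le> norm (x + inverse c *\<^sub>R n)" by (rule p_le[OF Nsc[OF n]])
        also have "x + inverse c *\<^sub>R n = inverse c *\<^sub>R (c *\<^sub>R x + n)" using cpos
          by (simp add: algebra_simps)
        also have "norm \<dots> = inverse c * norm (c *\<^sub>R x + n)" using cpos by simp
        finally show "c * p x \<le> norm (c *\<^sub>R x + n)" using cpos
          by (simp add: field_simps)
      qed
      ultimately show ?thesis using cpos by (simp add: divide_le_eq mult.commute)
    qed
    obtain \<phi> where \<phi>: "\<forall>x y. \<phi> (x+y) = \<phi> x + \<phi> y" "\<forall>c x. \<phi> (c *\<^sub>R x) = c * \<phi> x"
        "\<forall>x. \<phi> x \<le> p x" "\<phi> f = p f"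
      using HB_sublinear[of p f, OF sub hom] by blast
    have \<phi>N: "\<forall>x. (\<forall>j\<in>{1..m}. blinfun_apply (\<nu> j) x = 0) \<longrightarrow> \<phi> x = 0"
    proof (intro allI impI)
      fix x assume "\<forall>j\<in>{1..m}. blinfun_apply (\<nu> j) x = 0"
      then have xN: "x \<in> N" by (simp add: N_def)
      have mxN: "-x \<in> N" using Nsc[OF xN, of "-1"] by simp
      have "\<phi> x \<le> 0" using \<phi>(3)[rule_format, of x] p_le[OF mxN, of x] by simp
      moreover have "\<phi> (-x) \<le> 0" using \<phi>(3)[rule_format, of "-x"] p_le[OF xN, of "-x"] by simp
      moreover have "\<phi> (-x) = - \<phi> x" using \<phi>(2)[rule_format, of "-1" x] by simp
      ultimately show "\<phi> x = 0" by simp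
    qed
    obtain c where c: "\<forall>x. \<phi> x = (\<Sum>j\<in>{1..m}. c j * blinfun_apply (\<nu> j) x)"
      using ker_comb[of "{1..m}" \<phi> \<nu>, OF _ \<phi>(1,2) \<phi>N] by auto
    define \<nu>0 where "\<nu>0 = (\<Sum>j=1..m. c j *\<^sub>R \<nu> j)"
    have \<nu>0app: "blinfun_apply \<nu>0 x = \<phi> x" for x
      using c by (simp add: \<nu>0_def blinfun.sum_left blinfun.scaleR_left)
    have \<nu>0le: "blinfun_apply \<nu>0 x \<le> norm x" for x
      using \<phi>(3) p_norm \<nu>0app by (metis order_trans)
    have \<nu>0f: "blinfun_apply \<nu>0 f = norm f" using \<nu>0app \<phi>(4) pf by simp
    have nfpos: "norm f > 0" using False by simp
    have n\<nu>0: "norm \<nu>0 = 1"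
    proof (rule antisym)
      show "norm \<nu>0 \<le> 1"
      proof (rule norm_blinfun_bound)
        fix x
        have "blinfun_apply \<nu>0 (-x) = - blinfun_apply \<nu>0 x" by (simp add: blinfun.minus_right)
        then show "norm (blinfun_apply \<nu>0 x) \<le> 1 * norm x"
          using \<nu>0le[of x] \<nu>0le[of "-x"] by auto
      qed simp
      have "norm f \<le> norm \<nu>0 * norm f" using norm_blinfun[of \<nu>0 f] \<nu>0f by simp
      then show "1 \<le> norm \<nu>0" using nfpos by simp
    qed
    define r where "r = norm f"
    define S where "S = r *\<^sub>R \<nu>0"
    have Ssum: "(\<Sum>j=1..m. (r * c j) *\<^sub>R \<nu> j) = S"
      by (simp add: S_def \<nu>0_def scaleR_sum_right)
    have nS: "norm S = r" using n\<nu>0 nfpos by (simp add: S_def r_def)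
    have S0: "S \<noteq> 0" using nS nfpos r_def by auto
    have key: "\<forall>\<mu>. blinfun_apply \<mu> f = norm S * gateaux_norm S \<mu>"
    proof
      fix \<mu> :: "'a \<Rightarrow>\<^sub>L real"
      let ?L = "gateaux_norm S \<mu>"
      have lim: "(norm_dq S \<mu> \<longlongrightarrow> ?L) (at 0)" by (rule gat_lim[OF assms(1) S0])
      have rpos: "r > 0" using nfpos r_def by simp
      have lower: "r + t * blinfun_apply \<mu> f / r \<le> norm (S + t *\<^sub>R \<mu>)" for t
      proof -
        have "blinfun_apply (S + t *\<^sub>R \<mu>) f \<le> norm (S + t *\<^sub>R \<mu>) * r"
          using norm_blinfun[of "S + t *\<^sub>R \<mu>" f] r_def by simp
        moreover have "blinfun_apply (S + t *\<^sub>R \<mu>) f = r * r + t * blinfun_apply \<mu> f"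
          using \<nu>0f r_def by (simp add: S_def blinfun.add_left blinfun.scaleR_left)
        ultimately have "r * r + t * blinfun_apply \<mu> f \<le> norm (S + t *\<^sub>R \<mu>) * r" by simp
        then show ?thesis using rpos by (simp add: field_simps)
      qed
      have dq_eq: "norm_dq S \<mu> t = (norm (S + t *\<^sub>R \<mu>) - r) / t" for t
        by (simp add: norm_dq_def nS)
      have right: "blinfun_apply \<mu> f / r \<le> norm_dq S \<mu> t" if "t > 0" for t
        using lower[of t] that by (simp add: dq_eq field_simps)
      have left: "norm_dq S \<mu> t \<le> blinfun_apply \<mu> f / r" if "t < 0" for t
      proof -
        have "t * blinfun_apply \<mu> f / r \<le> norm (S + t *\<^sub>R \<mu>) - r" using lower[of t] by simp
        then have "(norm (S + t *\<^sub>R \<mu>) - r) / t \<le> (t * blinfun_apply \<mu> f / r) / t"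
          using that by (intro divide_right_mono_neg) auto
        then show ?thesis using that by (simp add: dq_eq)
      qed
      have limR: "(norm_dq S \<mu> \<longlongrightarrow> ?L) (at_right 0)" and limL: "(norm_dq S \<mu> \<longlongrightarrow> ?L) (at_left 0)"
        using lim filterlim_at_split by blast+
      have evR: "eventually (\<lambda>t. blinfun_apply \<mu> f / r \<le> norm_dq S \<mu> t) (at_right (0::real))"
        using eventually_at_right_less by (rule eventually_mono) (use right in auto)
      have evL: "eventually (\<lambda>t. norm_dq S \<mu> t \<le> blinfun_apply \<mu> f / r) (at_left (0::real))"
        by (subst eventually_at_left[of "-1"]) (auto intro!: exI[of _ "-1"] left)
      have "blinfun_apply \<mu> f / r \<le> ?L" by (rule tendsto_lowerbound[OF limR evR]) simp
      moreover have "?L \<le> blinfun_apply \<mu> f / r" by (rule tendsto_upperbound[OF limL evL]) simp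
      ultimately have "?L = blinfun_apply \<mu> f / r" by simp
      then show "blinfun_apply \<mu> f = norm S * ?L" using nS rpos by simp
    qed
    show ?thesis
      using fM key Ssum by (intro conjI exI[of _ "\<lambda>j. r * c j"]) auto
  qed
next
  let ?M = "interp_set \<nu> m y"
  assume rhs: "f \<in> ?M \<and> (\<exists>c. \<forall>\<mu>. blinfun_apply \<mu> f =
            norm (\<Sum>j=1..m. c j *\<^sub>R \<nu> j) * gateaux_norm (\<Sum>j=1..m. c j *\<^sub>R \<nu> j) \<mu>)"
  then obtain c where fM: "f \<in> ?M" and
    c: "\<forall>\<mu>. blinfun_apply \<mu> f = norm (\<Sum>j=1..m. c j *\<^sub>R \<nu> j) * gateaux_norm (\<Sum>j=1..m. c j *\<^sub>R \<nu> j) \<mu>"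
    by blast
  define S where "S = (\<Sum>j=1..m. c j *\<^sub>R \<nu> j)"
  have c': "\<And>\<mu>. blinfun_apply \<mu> f = norm S * gateaux_norm S \<mu>" using c S_def by simp
  obtain \<mu>0 :: "'a \<Rightarrow>\<^sub>L real" where \<mu>0: "norm \<mu>0 \<le> 1" "blinfun_apply \<mu>0 f = norm f"
    using HB_norm by blast
  have Sg: "blinfun_apply S g = blinfun_apply S f" if "g \<in> ?M" for g
    using that fM by (simp add: S_def blinfun.sum_left blinfun.scaleR_left interp_set_def)
  have fle: "norm f \<le> norm g" if g: "g \<in> ?M" for g
  proof (cases "S = 0")
    case True
    then have "norm f = 0" using c'[of \<mu>0] \<mu>0 by simp
    then show ?thesis by simp
  next
    case False
    have "norm f = norm S * gateaux_norm S \<mu>0" using c'[of \<mu>0] \<mu>0 by simp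
    also have "\<dots> \<le> norm S * norm \<mu>0"
      using gat_bound[OF assms(1) False, of \<mu>0] by (intro mult_left_mono) auto
    also have "\<dots> \<le> norm S" using \<mu>0(1) by (simp add: mult_left_le)
    finally have f1: "norm f \<le> norm S" .
    have "blinfun_apply S f = norm S * norm S" using c'[of S] gat_self[OF assms(1) False] by simp
    then have "norm S * norm S \<le> norm S * norm g"
      using Sg[OF g] norm_blinfun[of S g] by simp
    then have "norm S \<le> norm g" using False by simp
    then show ?thesis using f1 by simp
  qed
  have "Inf (norm ` ?M) = norm f" by (rule cInf_eq_minimum) (use fM fle in auto)
  then show "min_norm_interp_sol \<nu> m y f" using fM by (simp add: min_norm_interp_sol_def)
qed

end
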